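(* Let $A$ be a finite group with a normal subgroup $G$ such that $A/G$ is cyclic. Let $X,Y\in A$ have the same image in $A/G$. Suppose that $X^2$ is conjugate to $Y^2$ in $A$ and that $X^r$ is conjugate to $Y^r$ in $A$ for some odd integer $r>1$, but that $X$ is not conjugate to $Y$ in $A$. Then $4$ divides $|G|$. *)

theory Defs
  imports "HOL-Algebra.Algebra"
begin

definition conjugate_in :: "('a, 'b) monoid_scheme \<Rightarrow> 'a \<Rightarrow> 'a \<Rightarrow> bool" where
  "conjugate_in A x y \<longleftrightarrow>
     (\<exists>g \<in> carrier A. y = g \<otimes>\<^bsub>A\<^esub> x \<otimes>\<^bsub>A\<^esub> inv\<^bsub>A\<^esub> g)"

end

theory Submission
  imports Defs
begin


lemma invol_even:
  assumes "finite D" "\<And>x. x \<in> D \<Longrightarrow> f x \<in> D" "\<And>x. x \<in> D \<Longrightarrow> f (f x) = x"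
    "\<And>x. x \<in> D \<Longrightarrow> f x \<noteq> x"
  shows "even (card D)"
  using assms
proof (induction "card D" arbitrary: D rule: less_induct)
  case less
  show ?case
  proof (cases "D = {}")
    case True then show ?thesis by simp
  next
    case False
    then obtain x where x: "x \<in> D" by blast
    define D' where "D' = D - {x, f x}"
    have fx: "f x \<in> D" "f x \<noteq> x" using less x by auto
    have c2: "card {x, f x} = 2" using fx by simp
    have sub: "{x, f x} \<subseteq> D" using x fx by simp
    have "card {x, f x} \<le> card D" using card_mono[OF less(2) sub] .
    moreover have "card D' = card D - card {x, f x}"
      unfolding D'_def using less(2) sub by (simp add: card_Diff_subset finite_subset)
    ultimately have cD: "card D = card D' + 2" using c2 by linarith
    have "even (card D')"
    proof (rule less(1))
      show "card D' < card D" using cD by simp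
      show "finite D'" using less(2) D'_def by simp
      fix z assume z: "z \<in> D'"
      have zD: "z \<in> D" "z \<noteq> x" "z \<noteq> f x" using z D'_def by auto
      have "f z \<noteq> x" using zD less(4)[of z] by auto
      moreover have "f z \<noteq> f x" using zD less(4)[of z] less(4)[OF x] by metis
      ultimately show "f z \<in> D'" using zD less(3) D'_def by auto
      show "f (f z) = z" using z less(4) D'_def by simp
      show "f z \<noteq> z" using z less(5) D'_def by simp
    qed
    then show ?thesis using cD by simp
  qed
qed

lemma pow2_fix_parity:
  assumes "finite S" "\<And>x. x \<in> S \<Longrightarrow> f x \<in> S" "\<And>x. x \<in> S \<Longrightarrow> (f ^^ (2 ^ a)) x = x"
  shows "even (card S + card {x\<in>S. f x = x})"
  using assms
proof (induction a arbitrary: f)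
  case 0
  then have "{x\<in>S. f x = x} = S" by auto
  then show ?case by simp
next
  case (Suc a)
  define g where "g = f \<circ> f"
  have gpow: "(g ^^ n) = f ^^ (2 * n)" for n
  proof -
    have "g = f ^^ 2" unfolding g_def by (simp add: numeral_2_eq_2)
    then show ?thesis by (simp add: funpow_mult)
  qed
  have IH: "even (card S + card {x\<in>S. g x = x})"
  proof (rule Suc.IH)
    show "finite S" by fact
    fix x assume "x \<in> S"
    then show "g x \<in> S" using Suc.prems(2) g_def by simp
    show "(g ^^ 2 ^ a) x = x" using Suc.prems(3)[OF \<open>x\<in>S\<close>] by (simp add: gpow)
  qed
  define T where "T = {x\<in>S. g x = x}"
  have fin: "finite T" using Suc.prems(1) T_def by simp
  have split: "T = {x\<in>T. f x = x} \<union> {x\<in>T. f x \<noteq> x}" by auto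
  have "card T = card {x\<in>T. f x = x} + card {x\<in>T. f x \<noteq> x}"
    using fin by (subst split) (rule card_Un_disjoint, auto)
  moreover have "even (card {x\<in>T. f x \<noteq> x})"
  proof (rule invol_even)
    show "finite {x \<in> T. f x \<noteq> x}" using fin by simp
    fix x assume x: "x \<in> {x \<in> T. f x \<noteq> x}"
    then have xs: "x \<in> S" "f (f x) = x" "f x \<noteq> x" by (auto simp: T_def g_def)
    show "f x \<in> {x \<in> T. f x \<noteq> x}" using xs Suc.prems(2) by (auto simp: T_def g_def)
    show "f (f x) = x" by fact
    show "f x \<noteq> x" by fact
  qed
  moreover have "{x\<in>T. f x = x} = {x\<in>S. f x = x}" by (auto simp: T_def g_def)
  ultimately have "even (card T + card {x\<in>S. f x = x})" by presburger
  then show ?case using IH unfolding T_def by presburger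
qed

lemma pow2_fix:
  assumes "finite S" "\<And>x. x \<in> S \<Longrightarrow> f x \<in> S" "\<And>x. x \<in> S \<Longrightarrow> (f ^^ (2 ^ a)) x = x"
    "odd (card S)"
  shows "\<exists>x\<in>S. f x = x"
proof -
  have "even (card S + card {x\<in>S. f x = x})" using pow2_fix_parity assms(1-3) by blast
  then have "odd (card {x\<in>S. f x = x})" using assms(4) by simp
  then have "card {x\<in>S. f x = x} \<noteq> 0" by (metis even_zero)
  then show ?thesis by (metis (mono_tags, lifting) card.empty empty_Collect_eq)
qed


lemma odd_part_exists:
  fixes n :: nat assumes "n > 0" shows "\<exists>a m. n = 2^a * m \<and> odd m"
  using assms
proof (induction n rule: less_induct)
  case (less n)
  show ?case
  proof (cases "odd n")
    case True then show ?thesis by (rule_tac x=0 in exI) auto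
  next
    case False
    then obtain k where k: "n = 2 * k" by blast
    then have "k < n" "k > 0" using less.prems by auto
    then obtain a m where "k = 2^a * m" "odd m" using less.IH by blast
    then show ?thesis using k by (rule_tac x="Suc a" in exI, rule_tac x=m in exI) auto
  qed
qed

lemma exps:
  fixes n :: nat and r :: int
  assumes "n > 0" "odd r"
  shows "\<exists>(a::nat) (e::int) (al::int) (be::int). int n dvd (e * 2^a) \<and> int n dvd (r*al - e)
           \<and> int n dvd (2*be - (1 - e))"
proof -
  obtain a m where nm: "n = 2^a * m" "odd m" using odd_part_exists assms(1) by blast
  have cop1: "coprime ((2::int)^a) (int m)" using nm(2) by simp
  obtain p q :: int where pq: "p * 2^a + q * int m = 1"
    using bezout_int[of "(2::int)^a" "int m"] cop1 by (metis coprime_iff_gcd_eq_1)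
  have cop2: "coprime r ((2::int)^a)" using assms(2) by simp
  obtain r' s :: int where rs: "r' * r + s * 2^a = 1"
    using bezout_int[of r "(2::int)^a"] cop2 by (metis coprime_iff_gcd_eq_1)
  obtain h :: int where h: "2 * h = int m + 1" using nm(2)
  proof -
    have "even (int m + 1)" using nm(2) by simp
    then show ?thesis using that by (metis dvdE)
  qed
  define e where "e = q * int m"
  define al where "al = r' * q * int m"
  define be where "be = h * p * 2^a"
  have N: "int n = 2^a * int m" using nm(1) by simp
  have 1: "e * 2^a = q * int n" using N e_def by simp
  have 2: "r*al - e = - (s * q) * int n"
  proof -
    have "r*al - e = (r' * r - 1) * q * int m" unfolding al_def e_def by (simp add: algebra_simps)
    also have "r' * r - 1 = - s * 2^a" using rs by simp
    finally show ?thesis using N by (simp add: algebra_simps)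
  qed
  have 3: "2*be - (1 - e) = p * int n"
  proof -
    have "1 - e = p * 2^a" using pq e_def by simp
    then have "2*be - (1 - e) = (2*h - 1) * p * 2^a" unfolding be_def by (simp add: algebra_simps)
    also have "... = p * int n" using h N by (simp add: algebra_simps)
    finally show ?thesis .
  qed
  show ?thesis
    apply (rule exI[of _ a], rule exI[of _ e], rule exI[of _ al], rule exI[of _ be])
    using 1 2 3 by (metis dvd_triv_right)
qed


lemma (in group) pow_congr:
  assumes "finite (carrier G)" "z \<in> carrier G" "int (order G) dvd (i - j)"
  shows "z [^] (i::int) = z [^] (j::int)"
proof -
  have "ord z dvd order G" using ord_dvd_group_order assms(2) by blast
  then have "int (ord z) dvd (i - j)" using assms(3) by (meson dvd_trans int_dvd_int_iff)
  then show ?thesis using int_pow_eq[OF assms(2), of j i] by simp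
qed

lemma (in group) conj_hom:
  assumes "g \<in> carrier G" shows "(\<lambda>z. g \<otimes> z \<otimes> inv g) \<in> hom G G"
  unfolding hom_def using assms apply (auto simp: m_assoc)
  by (metis inv_closed l_inv l_one m_assoc m_closed)

lemma (in group) conj_int_pow:
  assumes "g \<in> carrier G" "z \<in> carrier G"
  shows "(g \<otimes> z \<otimes> inv g) [^] (i::int) = g \<otimes> z [^] i \<otimes> inv g"
  using hom_int_pow[OF conj_hom[OF assms(1)] assms(2) is_group is_group] by simp

lemma (in group) comm_inv:
  assumes "a \<in> carrier G" "b \<in> carrier G" "a \<otimes> b = b \<otimes> a"
  shows "inv a \<otimes> b = b \<otimes> inv a"
proof -
  have 1: "inv a \<otimes> (a \<otimes> b) = b" using assms(1,2) by (simp add: m_assoc[symmetric])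
  have "b \<otimes> inv a = inv a \<otimes> (a \<otimes> b) \<otimes> inv a" by (simp add: 1)
  also have "... = inv a \<otimes> (b \<otimes> a) \<otimes> inv a" using assms by simp
  also have "... = inv a \<otimes> (b \<otimes> (a \<otimes> inv a))" using assms(1,2) by (simp add: m_assoc)
  also have "... = inv a \<otimes> b" using assms by simp
  finally show ?thesis by simp
qed


lemma (in group) core:
  assumes fin: "finite (carrier G)"
    and nK: "K \<lhd> G" and oK: "odd (card K)"
    and sN: "subgroup N G"
    and sq: "\<And>w. w \<in> N \<Longrightarrow> w \<otimes> w \<in> K"
    and ab: "\<And>a b. a \<in> carrier G \<Longrightarrow> b \<in> carrier G \<Longrightarrow> K #> (a \<otimes> b) = K #> (b \<otimes> a)"
    and x: "x \<in> carrier G" and y: "y \<in> carrier G"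
    and cos: "N #> x = N #> y"
    and c2: "conjugate_in G (x [^] (2::nat)) (y [^] (2::nat))"
    and r: "odd r"
    and cr: "conjugate_in G (x [^] (r::int)) (y [^] r)"
  shows "conjugate_in G x y"
proof -
  interpret K: normal K G by fact
  have sK: "subgroup K G" by (rule K.subgroup_axioms)
  define Q where "Q = G Mod K"
  define \<phi> where "\<phi> = (\<lambda>a. K #> a)"
  have Qg: "group Q" unfolding Q_def by (rule K.factorgroup_is_group)
  have hom: "\<phi> \<in> hom G Q" unfolding Q_def \<phi>_def by (rule K.r_coset_hom_Mod)
  have \<phi>mul: "\<phi> (a \<otimes> b) = \<phi> a \<otimes>\<^bsub>Q\<^esub> \<phi> b" if "a \<in> carrier G" "b \<in> carrier G" for a b
    using hom that by (simp add: hom_mult)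
  have \<phi>car: "\<phi> a \<in> carrier Q" if "a \<in> carrier G" for a
    using hom that by (simp add: hom_in_carrier)
  have \<phi>comm: "\<phi> a \<otimes>\<^bsub>Q\<^esub> \<phi> b = \<phi> b \<otimes>\<^bsub>Q\<^esub> \<phi> a" if "a \<in> carrier G" "b \<in> carrier G" for a b
    using that ab \<phi>mul \<phi>_def by metis
  have \<phi>pow: "\<phi> (a [^] (i::int)) = \<phi> a [^]\<^bsub>Q\<^esub> i" if "a \<in> carrier G" for a i
    using hom_int_pow[OF hom that is_group Qg] .
  have \<phi>one: "\<phi> k = \<one>\<^bsub>Q\<^esub>" if "k \<in> K" for k
    using that unfolding \<phi>_def Q_def by (simp add: K.rcos_const is_group)
  have \<phi>eq: "a \<otimes> inv b \<in> K" if "\<phi> a = \<phi> b" "a \<in> carrier G" "b \<in> carrier G" for a b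
  proof -
    have "a \<in> K #> b" using that rcos_self[OF that(2) sK] unfolding \<phi>_def by simp
    then show ?thesis using K.rcos_module_imp[OF is_group that(3)] by blast
  qed
  have \<phi>conj: "\<phi> (g \<otimes> z \<otimes> inv g) = \<phi> z" if "g \<in> carrier G" "z \<in> carrier G" for g z
  proof -
    have "\<phi> (g \<otimes> z \<otimes> inv g) = \<phi> (inv g \<otimes> (g \<otimes> z))"
      unfolding \<phi>_def using ab that by simp
    also have "inv g \<otimes> (g \<otimes> z) = z" using that by (simp add: m_assoc[symmetric])
    finally show ?thesis .
  qed
  have xN: "x \<in> N #> y" using cos rcos_self[OF x sN] by simp
  define w where "w = x \<otimes> inv y"
  have wN: "w \<in> N" using subgroup.rcos_module_imp[OF sN is_group y xN] w_def by simp
  have wc: "w \<in> carrier G" by (rule subgroup.mem_carrier[OF sN wN])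
  have xw: "x = w \<otimes> y" unfolding w_def using y x by (simp add: m_assoc)
  obtain h where h: "h \<in> carrier G" "y [^] r = h \<otimes> x [^] r \<otimes> inv h"
    using cr unfolding conjugate_in_def by blast
  have \<phi>x: "\<phi> x = \<phi> w \<otimes>\<^bsub>Q\<^esub> \<phi> y" using \<phi>mul[OF wc y] xw by simp
  have "\<phi> (y [^] r) = \<phi> (x [^] r)" using h \<phi>conj[of h "x [^] r"] x by simp
  also have "\<phi> (x [^] r) = (\<phi> w \<otimes>\<^bsub>Q\<^esub> \<phi> y) [^]\<^bsub>Q\<^esub> r"
    using \<phi>pow[OF x] \<phi>x by simp
  also have "... = \<phi> w [^]\<^bsub>Q\<^esub> r \<otimes>\<^bsub>Q\<^esub> \<phi> y [^]\<^bsub>Q\<^esub> r"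
    using group.int_pow_mult_distrib[OF Qg \<phi>comm[OF wc y] \<phi>car[OF wc] \<phi>car[OF y]] .
  finally have "\<phi> y [^]\<^bsub>Q\<^esub> r = \<phi> w [^]\<^bsub>Q\<^esub> r \<otimes>\<^bsub>Q\<^esub> \<phi> y [^]\<^bsub>Q\<^esub> r"
    using \<phi>pow[OF y] by simp
  then have wr: "\<phi> w [^]\<^bsub>Q\<^esub> r = \<one>\<^bsub>Q\<^esub>"
    using group.r_cancel_one'[OF Qg group.int_pow_closed[OF Qg \<phi>car[OF y]] group.int_pow_closed[OF Qg \<phi>car[OF wc]]]
    by blast
  have w2: "\<phi> w [^]\<^bsub>Q\<^esub> (2::int) = \<one>\<^bsub>Q\<^esub>"
  proof -
    have "\<phi> w [^]\<^bsub>Q\<^esub> (2::int) = \<phi> (w [^] (2::int))" using \<phi>pow[OF wc] by simp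
    also have "w [^] (2::int) = w [^] (1::int) \<otimes> w [^] (1::int)"
      using int_pow_mult[OF wc, of 1 1] by simp
    also have "... = w \<otimes> w" using int_pow_1[OF wc] by simp
    finally show ?thesis using \<phi>one sq wN by simp
  qed
  obtain k where rk: "r = 2 * k + 1" using r by (metis oddE)
  have wQ: "\<phi> w \<in> carrier Q" by (rule \<phi>car[OF wc])
  have "\<phi> w [^]\<^bsub>Q\<^esub> r = (\<phi> w [^]\<^bsub>Q\<^esub> (2::int)) [^]\<^bsub>Q\<^esub> k \<otimes>\<^bsub>Q\<^esub> \<phi> w [^]\<^bsub>Q\<^esub> (1::int)"
    unfolding rk using group.int_pow_mult[OF Qg wQ, of "2*k" 1] group.int_pow_pow[OF Qg wQ, of 2 k] by simp
  also have "... = \<phi> w" using w2 group.int_pow_one[OF Qg] group.int_pow_1[OF Qg wQ]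
    monoid.l_one[OF group.is_monoid[OF Qg] wQ] by simp
  finally have w1: "\<phi> w = \<one>\<^bsub>Q\<^esub>" using wr by simp
  have \<phi>xy: "\<phi> x = \<phi> y"
    using \<phi>x w1 monoid.l_one[OF group.is_monoid[OF Qg] \<phi>car[OF y]] by simp
  have n0: "order G > 0" using fin one_closed unfolding order_def by (auto simp: card_gt_0_iff)
  obtain a e al be where E: "int (order G) dvd (e * 2^a)" "int (order G) dvd (r*al - e)"
    "int (order G) dvd (2*be - (1 - e))"
    using exps[OF n0 r] by blast
  obtain g where g: "g \<in> carrier G" "y [^] (2::nat) = g \<otimes> x [^] (2::nat) \<otimes> inv g"
    using c2 unfolding conjugate_in_def by blast
  define u where "u = x [^] (1 - e)"
  define Y where "Y = inv g \<otimes> y \<otimes> g"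
  have Yc: "Y \<in> carrier G" using Y_def g y by simp
  have uc: "u \<in> carrier G" using u_def x by simp
  have sqpow: "z [^] (1 - e) = (z [^] (2::nat)) [^] be" if "z \<in> carrier G" for z
  proof -
    have "(z [^] (2::nat)) [^] be = z [^] (2 * be)" using that int_pow_pow[OF that, of 2 be]
      by (metis int_pow_int of_nat_numeral)
    also have "... = z [^] (1 - e)" using pow_congr[OF fin that E(3)] .
    finally show ?thesis by simp
  qed
  have yu: "y [^] (1 - e) = g \<otimes> u \<otimes> inv g"
    using sqpow[OF y] g conj_int_pow[OF g(1)] sqpow[OF x] u_def x by simp
  have Yu: "Y [^] (1 - e) = u"
  proof -
    have "Y [^] (1 - e) = inv g \<otimes> y [^] (1 - e) \<otimes> inv (inv g)"
      using conj_int_pow[of "inv g" y] g y Y_def by simp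
    also have "... = u" using yu g uc by (simp add: m_assoc[symmetric], simp add: m_assoc)
    finally show ?thesis .
  qed
  define t where "t = x [^] e"
  define s where "s = Y [^] e"
  have tc: "t \<in> carrier G" "s \<in> carrier G" using t_def s_def x Yc by auto
  have split: "z = z [^] e \<otimes> z [^] (1 - e)" "z [^] e \<otimes> z [^] (1 - e) = z [^] (1 - e) \<otimes> z [^] e"
    if "z \<in> carrier G" for z
    using int_pow_mult[OF that, of e "1 - e"] int_pow_mult[OF that, of "1 - e" e] that by simp_all
  have xtu: "x = t \<otimes> u" and tu: "t \<otimes> u = u \<otimes> t" using split[OF x] t_def u_def by auto
  have Ysu: "Y = s \<otimes> u" and su: "s \<otimes> u = u \<otimes> s" using split[OF Yc] s_def Yu by auto
  have t1: "(z [^] e) [^] ((2::nat) ^ a) = \<one>" if "z \<in> carrier G" for z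
  proof -
    have "(z [^] e) [^] ((2::nat) ^ a) = (z [^] e) [^] (int (2 ^ a))" by (simp only: int_pow_int)
    also have "... = z [^] (e * 2 ^ a)" using int_pow_pow[OF that] by simp
    also have "... = z [^] (0::int)" using pow_congr[OF fin that, of "e * 2 ^ a" 0] E(1) by simp
    finally show ?thesis by simp
  qed
  have tpow: "t [^] ((2::nat) ^ a) = \<one>" "s [^] ((2::nat) ^ a) = \<one>"
    using t1[OF x] t1[OF Yc] t_def s_def by auto
  have \<phi>Y: "\<phi> Y = \<phi> y" using \<phi>conj[of "inv g" y] g y Y_def by simp
  have \<phi>ts: "\<phi> s = \<phi> t" using \<phi>pow x Yc \<phi>Y \<phi>xy t_def s_def by metis
  have w0: "inv t \<otimes> s \<in> K"
  proof -
    have "s \<otimes> inv t \<in> K" using \<phi>eq[OF \<phi>ts] tc by simp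
    then have "inv t \<otimes> (s \<otimes> inv t) \<otimes> t \<in> K" using K.inv_op_closed1 tc by simp
    then show ?thesis using tc by (simp add: m_assoc)
  qed
  define Ku where "Ku = {k \<in> K. k \<otimes> u = u \<otimes> k}"
  have Kc: "k \<in> carrier G" if "k \<in> K" for k by (rule subgroup.mem_carrier[OF sK that])
  have itu: "inv t \<otimes> u = u \<otimes> inv t"
    using comm_inv[OF tc(1) uc tu] .
  have subKu: "subgroup Ku G"
  proof (rule subgroupI)
    show "Ku \<subseteq> carrier G" unfolding Ku_def using Kc by auto
    have "\<one> \<in> Ku" using uc Ku_def subgroup.one_closed[OF sK] by simp
    then show "Ku \<noteq> {}" by auto
  next
    fix k assume k: "k \<in> Ku"
    then have kK: "k \<in> K" and kc: "k \<in> carrier G" and ku: "k \<otimes> u = u \<otimes> k" unfolding Ku_def using Kc by auto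
    have "u \<otimes> inv k = inv k \<otimes> u" using comm_inv[OF kc uc ku] by simp
    moreover have "inv k \<in> K" by (rule subgroup.m_inv_closed[OF sK kK])
    ultimately show "inv k \<in> Ku" unfolding Ku_def by simp
  next
    fix k l assume k: "k \<in> Ku" and l: "l \<in> Ku"
    then have kK: "k \<in> K" "l \<in> K" and ku: "k \<otimes> u = u \<otimes> k" and lu: "l \<otimes> u = u \<otimes> l" and kc: "k \<in> carrier G" "l \<in> carrier G"
      unfolding Ku_def using Kc by auto
    have c1: "k \<otimes> l \<otimes> u = u \<otimes> (k \<otimes> l)"
    proof -
      have "k \<otimes> l \<otimes> u = k \<otimes> (l \<otimes> u)" using kc uc by (simp add: m_assoc)
      also have "... = k \<otimes> (u \<otimes> l)" using lu by simp
      also have "... = (k \<otimes> u) \<otimes> l" using kc uc by (simp add: m_assoc)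
      also have "... = u \<otimes> (k \<otimes> l)" using ku kc uc by (simp add: m_assoc)
      finally show ?thesis .
    qed
    have c2: "k \<otimes> l \<in> K" using subgroup.m_closed[OF sK kK] .
    show "k \<otimes> l \<in> Ku" unfolding Ku_def using c1 c2 by simp
  qed
  have KuK: "Ku \<subseteq> K" using Ku_def by auto
  have finK: "finite K" by (rule finite_subset[OF subgroup.subset[OF sK] fin])
  have oKu: "odd (card Ku)"
  proof -
    have gK: "group (G\<lparr>carrier := K\<rparr>)" by (rule subgroup.subgroup_is_group[OF sK is_group])
    have s2: "subgroup Ku (G\<lparr>carrier := K\<rparr>)" by (rule subgroup_incl[OF subKu sK KuK])
    have "card (rcosets\<^bsub>G\<lparr>carrier := K\<rparr>\<^esub> Ku) * card Ku = order (G\<lparr>carrier := K\<rparr>)"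
      using group.lagrange[OF gK s2] by simp
    then have "card (rcosets\<^bsub>G\<lparr>carrier := K\<rparr>\<^esub> Ku) * card Ku = card K" unfolding order_def by simp
    then have "card Ku dvd card K" by (metis dvd_triv_right)
    then show ?thesis using oK by (auto elim: dvd_trans)
  qed
  define \<sigma> where "\<sigma> = (\<lambda>k. inv t \<otimes> k \<otimes> s)"
  have \<sigma>K: "\<sigma> k \<in> Ku" if "k \<in> Ku" for k
  proof -
    have kK: "k \<in> K" and kc: "k \<in> carrier G" and ku: "k \<otimes> u = u \<otimes> k" using that unfolding Ku_def using Kc by auto
    have "\<sigma> k = (inv t \<otimes> k \<otimes> t) \<otimes> (inv t \<otimes> s)" using \<sigma>_def tc kc by (simp add: m_assoc, simp add: m_assoc[symmetric])
    moreover have "inv t \<otimes> k \<otimes> t \<in> K" using K.inv_op_closed1 tc kK by simp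
    ultimately have "\<sigma> k \<in> K" using w0 subgroup.m_closed[OF sK] by simp
    moreover have "\<sigma> k \<otimes> u = u \<otimes> \<sigma> k"
    proof -
      have "\<sigma> k \<otimes> u = inv t \<otimes> (k \<otimes> (s \<otimes> u))" using \<sigma>_def tc kc uc by (simp add: m_assoc)
      also have "... = inv t \<otimes> (k \<otimes> u) \<otimes> s" using su tc kc uc by (simp add: m_assoc)
      also have "... = (inv t \<otimes> u) \<otimes> k \<otimes> s" using ku tc kc uc by (simp add: m_assoc)
      also have "... = u \<otimes> \<sigma> k" using itu \<sigma>_def tc kc uc by (simp add: m_assoc)
      finally show ?thesis .
    qed
    ultimately show ?thesis unfolding Ku_def by simp
  qed
  have \<sigma>pow: "(\<sigma> ^^ j) k = inv (t [^] j) \<otimes> k \<otimes> s [^] j" if "k \<in> carrier G" for k and j :: nat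
  proof (induction j)
    case 0 then show ?case using that by simp
  next
    case (Suc j)
    have "(\<sigma> ^^ Suc j) k = inv t \<otimes> (inv (t [^] j) \<otimes> k \<otimes> s [^] j) \<otimes> s" using Suc \<sigma>_def by simp
    also have "... = inv (t [^] j \<otimes> t) \<otimes> k \<otimes> (s [^] j \<otimes> s)"
      using tc that by (simp add: m_assoc inv_mult_group)
    finally show ?case by (simp add: nat_pow_Suc)
  qed
  have "\<exists>k\<in>Ku. \<sigma> k = k"
  proof (rule pow2_fix[of Ku \<sigma> a])
    show "finite Ku" by (rule finite_subset[OF KuK finK])
    show "odd (card Ku)" by fact
    fix k assume kKu: "k \<in> Ku"
    then show "\<sigma> k \<in> Ku" by (rule \<sigma>K)
    have "k \<in> carrier G" using kKu unfolding Ku_def using Kc by auto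
    then show "(\<sigma> ^^ 2 ^ a) k = k" using \<sigma>pow[of k "2^a"] tpow by simp
  qed
  then obtain k where k: "k \<in> Ku" "\<sigma> k = k" by auto
  have kc: "k \<in> carrier G" and ku: "k \<otimes> u = u \<otimes> k" using k unfolding Ku_def using Kc by auto
  have sk: "s = inv k \<otimes> t \<otimes> k"
  proof -
    have "inv t \<otimes> k \<otimes> s = k" using k \<sigma>_def by simp
    then have "t \<otimes> (inv t \<otimes> k \<otimes> s) = t \<otimes> k" by simp
    then have "k \<otimes> s = t \<otimes> k" using tc kc by (simp add: m_assoc[symmetric])
    then have "inv k \<otimes> (k \<otimes> s) = inv k \<otimes> (t \<otimes> k)" by simp
    then show ?thesis using tc kc by (simp add: m_assoc[symmetric])
  qed
  have "Y = inv k \<otimes> x \<otimes> k"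
  proof -
    have "Y = inv k \<otimes> t \<otimes> (k \<otimes> u)" using Ysu sk tc kc uc by (simp add: m_assoc)
    also have "... = inv k \<otimes> (t \<otimes> u) \<otimes> k" using ku tc kc uc by (simp add: m_assoc)
    finally show ?thesis using xtu by simp
  qed
  then have Yk: "inv g \<otimes> y \<otimes> g = inv k \<otimes> x \<otimes> k" using Y_def by simp
  have "y = g \<otimes> (inv g \<otimes> y \<otimes> g) \<otimes> inv g" using g y
    by (simp add: m_assoc[symmetric], simp add: m_assoc)
  also have "... = (g \<otimes> inv k) \<otimes> x \<otimes> inv (g \<otimes> inv k)"
    unfolding Yk using g kc x by (simp add: m_assoc inv_mult_group)
  finally have "y = (g \<otimes> inv k) \<otimes> x \<otimes> inv (g \<otimes> inv k)" .
  moreover have "g \<otimes> inv k \<in> carrier G" using g kc by simp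
  ultimately show ?thesis unfolding conjugate_in_def by (intro bexI)
qed


lemma sign_fpf_invol:
  assumes "finite S" "p permutes S" "\<And>x. x \<in> S \<Longrightarrow> p (p x) = x" "\<And>x. x \<in> S \<Longrightarrow> p x \<noteq> x"
  shows "sign p = (-1::int) ^ (card S div 2)"
  using assms
proof (induction "card S" arbitrary: S p rule: less_induct)
  case less
  show ?case
  proof (cases "S = {}")
    case True
    then have "p = id" using less.prems(2) by simp
    then show ?thesis using True by simp
  next
    case False
    then obtain x where x: "x \<in> S" by blast
    define y where "y = p x"
    have y: "y \<in> S" "y \<noteq> x" "p y = x" using less.prems x y_def permutes_in_image[OF less.prems(2)] by auto
    define q where "q = transpose x y \<circ> p"
    have qS: "q permutes S" unfolding q_def
      by (rule permutes_compose[OF less.prems(2) permutes_swap_id[OF x y(1)]])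
    have qx: "q x = x" "q y = y" unfolding q_def using y y_def by auto
    have qz: "q z = p z" if "z \<in> S" "z \<noteq> x" "z \<noteq> y" for z
    proof -
      have "p z \<noteq> x" using that less.prems(3)[of z] y y_def by metis
      moreover have "p z \<noteq> y" using that less.prems(3)[of z] less.prems(3)[OF x] y_def by metis
      ultimately show ?thesis unfolding q_def by simp
    qed
    define S' where "S' = S - {x, y}"
    have qS': "q permutes S'"
      by (rule permutes_superset[OF qS]) (use qx S'_def in auto)
    have cS: "card S = card S' + 2"
    proof -
      have c2: "card {x, y} = 2" using y by simp
      have sub: "{x, y} \<subseteq> S" using x y by simp
      have "card {x, y} \<le> card S" using card_mono[OF less.prems(1) sub] .
      moreover have "card S' = card S - card {x, y}"
        unfolding S'_def using less.prems(1) sub by (simp add: card_Diff_subset finite_subset)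
      ultimately show ?thesis using c2 by linarith
    qed
    have IH: "sign q = (-1::int) ^ (card S' div 2)"
    proof (rule less.hyps)
      show "card S' < card S" using cS by simp
      show "finite S'" using less.prems(1) S'_def by simp
      show "q permutes S'" by fact
      fix z assume z: "z \<in> S'"
      then have zz: "z \<in> S" "z \<noteq> x" "z \<noteq> y" using S'_def by auto
      have pz: "p z \<in> S" "p z \<noteq> x" "p z \<noteq> y"
        using zz less.prems(3)[of z] less.prems(3)[OF x] y_def permutes_in_image[OF less.prems(2)] by metis+
      show "q (q z) = z" using qz[OF zz] qz[OF pz] less.prems(3)[OF zz(1)] by simp
      show "q z \<noteq> z" using qz[OF zz] less.prems(4)[OF zz(1)] by simp
    qed
    have pq: "p = transpose x y \<circ> q" unfolding q_def by (simp add: comp_assoc[symmetric])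
    have "sign p = sign (transpose x y) * sign q"
      unfolding pq by (rule sign_compose) (auto intro: permutes_imp_permutation[OF less.prems(1) qS] permutation_swap_id)
    also have "... = - ((-1::int) ^ (card S' div 2))" using IH y(2) by (simp add: sign_swap_id)
    also have "... = (-1::int) ^ (card S div 2)" using cS by simp
    finally show ?thesis .
  qed
qed


lemma (in group) two_complement:
  assumes fin: "finite (carrier G)" and nN: "N \<lhd> G" and ev: "even (card N)" and n4: "\<not> 4 dvd card N"
  shows "\<exists>K. K \<lhd> G \<and> odd (card K) \<and> K \<subseteq> N \<and> (\<forall>w\<in>N. w \<otimes> w \<in> K)
             \<and> (\<forall>a\<in>carrier G. \<forall>n\<in>N. a \<otimes> n \<otimes> inv a \<otimes> inv n \<in> K)"
proof -
  interpret N: normal N G by fact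
  have sN: "subgroup N G" by (rule N.subgroup_axioms)
  have Nc: "z \<in> carrier G" if "z \<in> N" for z by (rule subgroup.mem_carrier[OF sN that])
  have finN: "finite N" by (rule finite_subset[OF subgroup.subset[OF sN] fin])
  define L where "L = (\<lambda>g z. if z \<in> N then g \<otimes> z else z)"
  have permL: "L g permutes N" if g: "g \<in> N" for g
  proof (rule bij_imp_permutes)
    show "bij_betw (L g) N N"
    proof (rule bij_betw_imageI)
      show "inj_on (L g) N" unfolding L_def inj_on_def using g Nc by auto
      show "L g ` N = N"
      proof
        show "L g ` N \<subseteq> N" unfolding L_def using g subgroup.m_closed[OF sN] by auto
        show "N \<subseteq> L g ` N"
        proof
          fix z assume z: "z \<in> N"
          have m: "inv g \<otimes> z \<in> N" using subgroup.m_closed[OF sN subgroup.m_inv_closed[OF sN g] z] .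
          have e: "L g (inv g \<otimes> z) = z" using m unfolding L_def using g z Nc
            by (simp add: m_assoc[symmetric])
          show "z \<in> L g ` N" by (rule image_eqI[where f="L g", OF e[symmetric] m])
        qed
      qed
    qed
    show "L g z = z" if "z \<notin> N" for z using that L_def by simp
  qed
  have perm: "permutation (L g)" if "g \<in> N" for g by (rule permutes_imp_permutation[OF finN permL[OF that]])
  define sg where "sg = (\<lambda>g. sign (L g))"
  have Lmul: "L (g \<otimes> h) = L g \<circ> L h" if "g \<in> N" "h \<in> N" for g h
    unfolding L_def using that Nc subgroup.m_closed[OF sN] by (auto simp: m_assoc)
  have sgmul: "sg (g \<otimes> h) = sg g * sg h" if "g \<in> N" "h \<in> N" for g h
    unfolding sg_def Lmul[OF that] by (rule sign_compose[OF perm[OF that(1)] perm[OF that(2)]])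
  have L1: "L \<one> = id" unfolding L_def using Nc by (auto simp: fun_eq_iff)
  have sg1: "sg \<one> = 1" unfolding sg_def L1 by simp
  have sgpm: "sg g = 1 \<or> sg g = -1" for g unfolding sg_def sign_def by simp
  have sginv: "sg (inv g) = sg g" if "g \<in> N" for g
  proof -
    have "sg (inv g) * sg g = 1"
      using sgmul[OF subgroup.m_inv_closed[OF sN that] that] sg1 Nc[OF that] by simp
    then show ?thesis using sgpm[of g] sgpm[of "inv g"] by auto
  qed
  obtain z where z: "z \<in> N" "z \<noteq> \<one>" "z \<otimes> z = \<one>"
  proof -
    define D where "D = {g \<in> N. inv g \<noteq> g}"
    define F where "F = {g \<in> N. inv g = g}"
    have "even (card D)"
    proof (rule invol_even[of D "\<lambda>g. inv g"])
      show "finite D" using finN D_def by simp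
      fix g assume g: "g \<in> D"
      then have gN: "g \<in> N" and gi: "inv g \<noteq> g" using D_def by auto
      show "inv g \<in> D" unfolding D_def using subgroup.m_inv_closed[OF sN gN] gi Nc[OF gN] by simp
      show "inv (inv g) = g" using Nc[OF gN] by simp
      show "inv g \<noteq> g" by fact
    qed
    moreover have "card N = card D + card F"
    proof -
      have NDF: "N = D \<union> F" unfolding D_def F_def by auto
      have "card (D \<union> F) = card D + card F"
        by (rule card_Un_disjoint) (use finN in \<open>auto simp: D_def F_def\<close>)
      then show ?thesis using NDF by simp
    qed
    ultimately have eF: "even (card F)" using ev by simp
    have oneF: "\<one> \<in> F" unfolding F_def using subgroup.one_closed[OF sN] by simp
    have "F \<noteq> {\<one>}"
    proof
      assume "F = {\<one>}" then show False using eF by simp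
    qed
    then obtain g where "g \<in> F" "g \<noteq> \<one>" using oneF by auto
    then have gN: "g \<in> N" and g1: "g \<noteq> \<one>" and gi: "inv g = g" unfolding F_def by auto
    have "g \<otimes> g = \<one>" using r_inv[OF Nc[OF gN]] gi by simp
    then show ?thesis by (rule that[OF gN g1])
  qed
  have zc: "z \<in> carrier G" by (rule Nc[OF z(1)])
  have cN: "card N = 2 * (card N div 2)" using ev by simp
  have oh: "odd (card N div 2)"
  proof
    assume "even (card N div 2)"
    then obtain j where "card N div 2 = 2 * j" by (rule evenE)
    then have "card N = 4 * j" using cN by simp
    then have "4 dvd card N" by simp
    then show False using n4 by simp
  qed
  have sgz: "sg z = -1"
  proof -
    have "sg z = (-1::int) ^ (card N div 2)"
      unfolding sg_def
    proof (rule sign_fpf_invol[OF finN permL[OF z(1)]])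
      fix w assume w: "w \<in> N"
      have zw: "z \<otimes> w \<in> N" by (rule subgroup.m_closed[OF sN z(1) w])
      show "L z (L z w) = w" unfolding L_def using w zw z(3) zc Nc[OF w] by (simp add: m_assoc[symmetric])
      show "L z w \<noteq> w" unfolding L_def using w z(2) zc Nc[OF w] by simp
    qed
    then show ?thesis using oh by simp
  qed
  define K where "K = {g \<in> N. sg g = 1}"
  have KN: "K \<subseteq> N" unfolding K_def by auto
  have sK: "subgroup K G"
  proof (rule subgroupI)
    show "K \<subseteq> carrier G" unfolding K_def using Nc by auto
    have "\<one> \<in> K" unfolding K_def using sg1 subgroup.one_closed[OF sN] by simp
    then show "K \<noteq> {}" by auto
  next
    fix g assume "g \<in> K"
    then have g: "g \<in> N" "sg g = 1" unfolding K_def by auto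
    show "inv g \<in> K" unfolding K_def using g sginv subgroup.m_inv_closed[OF sN g(1)] by simp
  next
    fix g h assume "g \<in> K" "h \<in> K"
    then have g: "g \<in> N" "sg g = 1" "h \<in> N" "sg h = 1" unfolding K_def by auto
    show "g \<otimes> h \<in> K" unfolding K_def using g sgmul subgroup.m_closed[OF sN g(1) g(3)] by simp
  qed
  have sgconj: "sg (a \<otimes> g \<otimes> inv a) = sg g" if a: "a \<in> carrier G" and g: "g \<in> N" for a g
  proof -
    define c where "c = (\<lambda>b z. if z \<in> N then b \<otimes> z \<otimes> inv b else z)"
    have cperm: "c b permutes N" if b: "b \<in> carrier G" for b
    proof (rule bij_imp_permutes)
      show "bij_betw (c b) N N"
      proof (rule bij_betw_imageI)
        show "inj_on (c b) N"
        proof (rule inj_onI)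
          fix v w assume v: "v \<in> N" and w: "w \<in> N" and e: "c b v = c b w"
          then have "b \<otimes> v \<otimes> inv b = b \<otimes> w \<otimes> inv b" unfolding c_def by simp
          then have "inv b \<otimes> (b \<otimes> v \<otimes> inv b) \<otimes> b = inv b \<otimes> (b \<otimes> w \<otimes> inv b) \<otimes> b" by simp
          moreover have "inv b \<otimes> (b \<otimes> z \<otimes> inv b) \<otimes> b = z" if "z \<in> carrier G" for z
            using b that by (simp add: m_assoc[symmetric], simp add: m_assoc)
          ultimately show "v = w" using Nc[OF v] Nc[OF w] by simp
        qed
        show "c b ` N = N"
        proof
          show "c b ` N \<subseteq> N" unfolding c_def using b N.inv_op_closed2 by auto
          show "N \<subseteq> c b ` N"
          proof
            fix w assume w: "w \<in> N"
            have m: "inv b \<otimes> w \<otimes> b \<in> N" by (rule N.inv_op_closed1[OF b w])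
            have e: "c b (inv b \<otimes> w \<otimes> b) = w" using m unfolding c_def using b w Nc
              by (simp add: m_assoc[symmetric], simp add: m_assoc)
            show "w \<in> c b ` N" by (rule image_eqI[where f="c b", OF e[symmetric] m])
          qed
        qed
      qed
      show "c b w = w" if "w \<notin> N" for w using that c_def by simp
    qed
    have ia: "inv a \<in> carrier G" using a by simp
    have eq: "L (a \<otimes> g \<otimes> inv a) = c a \<circ> L g \<circ> c (inv a)"
    proof
      fix w
      show "L (a \<otimes> g \<otimes> inv a) w = (c a \<circ> L g \<circ> c (inv a)) w"
      proof (cases "w \<in> N")
        case True
        have "inv a \<otimes> w \<otimes> a \<in> N" by (rule N.inv_op_closed1[OF a True])
        moreover have "g \<otimes> (inv a \<otimes> w \<otimes> a) \<in> N" by (rule subgroup.m_closed[OF sN g calculation])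
        ultimately show ?thesis unfolding L_def c_def using True a g Nc by (simp add: m_assoc)
      next
        case False then show ?thesis unfolding L_def c_def by simp
      qed
    qed
    have cc: "c a \<circ> c (inv a) = id"
    proof
      fix w
      show "(c a \<circ> c (inv a)) w = id w"
      proof (cases "w \<in> N")
        case True
        have m: "inv a \<otimes> w \<otimes> inv (inv a) \<in> N" using N.inv_op_closed1[OF a True] a by simp
        have "(c a \<circ> c (inv a)) w = a \<otimes> (inv a \<otimes> w \<otimes> inv (inv a)) \<otimes> inv a"
          unfolding c_def using True m by simp
        also have "... = w" using a Nc[OF True] by (simp add: m_assoc[symmetric], simp add: m_assoc)
        finally show ?thesis by simp
      next
        case False then show ?thesis unfolding c_def by simp
      qed
    qed
    have pa: "permutation (c a)" "permutation (c (inv a))"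
      using permutes_imp_permutation[OF finN cperm[OF a]] permutes_imp_permutation[OF finN cperm[OF ia]] by auto
    have "sign (c a) * sign (c (inv a)) = 1" using sign_compose[OF pa] cc by simp
    moreover have "sg (a \<otimes> g \<otimes> inv a) = sign (c a) * sg g * sign (c (inv a))"
      unfolding sg_def eq
      using sign_compose[OF permutation_compose[OF pa(1) perm[OF g]] pa(2)] sign_compose[OF pa(1) perm[OF g]]
      by simp
    moreover have "sign (c a) * sg g * sign (c (inv a)) = sg g * (sign (c a) * sign (c (inv a)))"
      by (simp add: algebra_simps)
    ultimately show ?thesis by simp
  qed
  have nK: "K \<lhd> G"
  proof (rule normal_invI[OF sK])
    fix a h assume a: "a \<in> carrier G" and h: "h \<in> K"
    then have hN: "h \<in> N" "sg h = 1" unfolding K_def by auto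
    show "a \<otimes> h \<otimes> inv a \<in> K" unfolding K_def using N.inv_op_closed2[OF a hN(1)] sgconj[OF a hN(1)] hN(2) by simp
  qed
  have oK: "odd (card K)"
  proof -
    have bij: "bij_betw (\<lambda>h. z \<otimes> h) K (N - K)"
    proof (rule bij_betw_imageI)
      show "inj_on (\<lambda>h. z \<otimes> h) K"
      proof (rule inj_onI)
        fix v w assume v: "v \<in> K" and w: "w \<in> K" and e: "z \<otimes> v = z \<otimes> w"
        have "v \<in> carrier G" "w \<in> carrier G" using v w KN Nc by auto
        then show "v = w" using e zc by simp
      qed
      show "(\<lambda>h. z \<otimes> h) ` K = N - K"
      proof
        show "(\<lambda>h. z \<otimes> h) ` K \<subseteq> N - K"
        proof
          fix w assume "w \<in> (\<lambda>h. z \<otimes> h) ` K"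
          then obtain h where h: "h \<in> K" "w = z \<otimes> h" by auto
          then have hN: "h \<in> N" "sg h = 1" unfolding K_def by auto
          have "sg w = -1" using h(2) sgmul[OF z(1) hN(1)] hN(2) sgz by simp
          then show "w \<in> N - K" unfolding K_def using h(2) subgroup.m_closed[OF sN z(1) hN(1)] by simp
        qed
        show "N - K \<subseteq> (\<lambda>h. z \<otimes> h) ` K"
        proof
          fix w assume w: "w \<in> N - K"
          then have wN: "w \<in> N" and sw: "sg w = -1" unfolding K_def using sgpm[of w] by auto
          have zwN: "z \<otimes> w \<in> N" by (rule subgroup.m_closed[OF sN z(1) wN])
          have "sg (z \<otimes> w) = 1" using sgmul[OF z(1) wN] sgz sw by simp
          then have "z \<otimes> w \<in> K" unfolding K_def using zwN by simp
          moreover have "w = z \<otimes> (z \<otimes> w)" using z(3) zc Nc[OF wN] by (simp add: m_assoc[symmetric])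
          ultimately show "w \<in> (\<lambda>h. z \<otimes> h) ` K" by (rule rev_image_eqI)
        qed
      qed
    qed
    have "card (N - K) = card K" using bij_betw_same_card[OF bij] by simp
    moreover have "card N = card K + card (N - K)"
      using card_Diff_subset[OF finite_subset[OF KN finN] KN] card_mono[OF finN KN] by simp
    ultimately have "card N div 2 = card K" by simp
    then show ?thesis using oh by simp
  qed
  have sq: "\<forall>w\<in>N. w \<otimes> w \<in> K"
  proof
    fix w assume w: "w \<in> N"
    have "sg (w \<otimes> w) = 1" using sgmul[OF w w] by (simp add: sg_def)
    then show "w \<otimes> w \<in> K" unfolding K_def using subgroup.m_closed[OF sN w w] by simp
  qed
  have comm: "\<forall>a\<in>carrier G. \<forall>n\<in>N. a \<otimes> n \<otimes> inv a \<otimes> inv n \<in> K"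
  proof (intro ballI)
    fix a n assume a: "a \<in> carrier G" and n: "n \<in> N"
    have c1: "a \<otimes> n \<otimes> inv a \<in> N" by (rule N.inv_op_closed2[OF a n])
    have c2: "inv n \<in> N" by (rule subgroup.m_inv_closed[OF sN n])
    have "sg (a \<otimes> n \<otimes> inv a \<otimes> inv n) = sg n * sg (inv n)"
      using sgmul[OF c1 c2] sgconj[OF a n] by simp
    also have "... = 1" using sginv[OF n] by (simp add: sg_def)
    finally show "a \<otimes> n \<otimes> inv a \<otimes> inv n \<in> K"
      unfolding K_def using subgroup.m_closed[OF sN c1 c2] by simp
  qed
  show ?thesis by (rule exI[of _ K], intro conjI nK oK KN sq comm)
qed


lemma (in group) comm4:
  assumes c: "m1 \<in> carrier G" "p \<in> carrier G" "m2 \<in> carrier G" "q \<in> carrier G"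
    and h1: "p \<otimes> m2 = m2 \<otimes> p" and h2: "m1 \<otimes> m2 = m2 \<otimes> m1" and h3: "p \<otimes> q = q \<otimes> p"
    and h4: "m1 \<otimes> q = q \<otimes> m1"
  shows "m1 \<otimes> p \<otimes> (m2 \<otimes> q) = m2 \<otimes> q \<otimes> (m1 \<otimes> p)"
proof -
  have "m1 \<otimes> p \<otimes> (m2 \<otimes> q) = m1 \<otimes> ((p \<otimes> m2) \<otimes> q)" using c by (simp add: m_assoc)
  also have "... = m1 \<otimes> ((m2 \<otimes> p) \<otimes> q)" by (simp only: h1)
  also have "... = (m1 \<otimes> m2) \<otimes> (p \<otimes> q)" using c by (simp add: m_assoc)
  also have "... = (m2 \<otimes> m1) \<otimes> (q \<otimes> p)" by (simp only: h2 h3)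
  also have "... = m2 \<otimes> ((m1 \<otimes> q) \<otimes> p)" using c by (simp add: m_assoc)
  also have "... = m2 \<otimes> ((q \<otimes> m1) \<otimes> p)" by (simp only: h4)
  also have "... = m2 \<otimes> q \<otimes> (m1 \<otimes> p)" using c by (simp add: m_assoc)
  finally show ?thesis .
qed

lemma (in group) eqK:
  assumes "subgroup K G" "u \<in> carrier G" "w \<in> carrier G" "u \<otimes> inv w \<in> K"
  shows "K #> u = K #> w"
proof -
  have "u \<in> K #> w" using subgroup.rcos_module_rev[OF assms(1) is_group assms(3) assms(2) assms(4)] .
  then show ?thesis using repr_independence[OF _ assms(3) assms(1)] by simp
qed

lemma (in group) ab_from_cyclic:
  assumes nN: "N \<lhd> G" and cyc: "cyclic_group (G Mod N)" and nK: "K \<lhd> G"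
    and comm: "\<forall>a\<in>carrier G. \<forall>n\<in>N. a \<otimes> n \<otimes> inv a \<otimes> inv n \<in> K"
    and a: "a \<in> carrier G" and b: "b \<in> carrier G"
  shows "K #> (a \<otimes> b) = K #> (b \<otimes> a)"
proof -
  interpret N: normal N G by fact
  interpret K: normal K G by fact
  have sN: "subgroup N G" by (rule N.subgroup_axioms)
  have sK: "subgroup K G" by (rule K.subgroup_axioms)
  have Nc: "z \<in> carrier G" if "z \<in> N" for z by (rule subgroup.mem_carrier[OF sN that])
  have gM: "group (G Mod N)" by (rule N.factorgroup_is_group)
  obtain C where C: "C \<in> carrier (G Mod N)" "carrier (G Mod N) = range (\<lambda>n::int. C [^]\<^bsub>G Mod N\<^esub> n)"
    using cyc group.cyclic_group[OF gM] by blast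
  obtain c where c: "c \<in> carrier G" "C = N #> c" using C(1) unfolding carrier_FactGroup by auto
  have dec: "\<exists>n\<in>N. \<exists>i::int. v = n \<otimes> c [^] i" if v: "v \<in> carrier G" for v
  proof -
    have "N #> v \<in> carrier (G Mod N)" unfolding carrier_FactGroup using v by auto
    then obtain i :: int where "N #> v = C [^]\<^bsub>G Mod N\<^esub> i" using C(2) by auto
    also have "... = N #> (c [^] i)" unfolding c(2) using N.FactGroup_int_pow[OF c(1)] by simp
    finally have "N #> v = N #> (c [^] i)" .
    then have "v \<in> N #> (c [^] i)" using rcos_self[OF v sN] by simp
    then have m: "v \<otimes> inv (c [^] i) \<in> N"
      using subgroup.rcos_module_imp[OF sN is_group int_pow_closed[OF c(1)]] by blast
    have "v = (v \<otimes> inv (c [^] i)) \<otimes> c [^] i" using v c(1) by (simp add: m_assoc)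
    then show ?thesis using m by blast
  qed
  define Q where "Q = G Mod K"
  define \<phi> where "\<phi> = (\<lambda>a. K #> a)"
  have Qg: "group Q" unfolding Q_def by (rule K.factorgroup_is_group)
  have hom: "\<phi> \<in> hom G Q" unfolding Q_def \<phi>_def by (rule K.r_coset_hom_Mod)
  have \<phi>mul: "\<phi> (u \<otimes> w) = \<phi> u \<otimes>\<^bsub>Q\<^esub> \<phi> w" if "u \<in> carrier G" "w \<in> carrier G" for u w
    using hom that by (simp add: hom_mult)
  have \<phi>car: "\<phi> u \<in> carrier Q" if "u \<in> carrier G" for u
    using hom that by (simp add: hom_in_carrier)
  have central: "\<phi> n \<otimes>\<^bsub>Q\<^esub> \<phi> v = \<phi> v \<otimes>\<^bsub>Q\<^esub> \<phi> n" if n: "n \<in> N" and v: "v \<in> carrier G" for n v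
  proof -
    have nc: "n \<in> carrier G" by (rule Nc[OF n])
    have "(v \<otimes> n) \<otimes> inv (n \<otimes> v) = v \<otimes> n \<otimes> inv v \<otimes> inv n"
      using nc v by (simp add: inv_mult_group m_assoc)
    then have "(v \<otimes> n) \<otimes> inv (n \<otimes> v) \<in> K" using comm v n by simp
    then have "\<phi> (v \<otimes> n) = \<phi> (n \<otimes> v)" unfolding \<phi>_def using eqK[OF sK] nc v by simp
    then show ?thesis using \<phi>mul nc v by simp
  qed
  obtain n1 i where n1: "n1 \<in> N" "a = n1 \<otimes> c [^] (i::int)" using dec[OF a] by blast
  obtain n2 j where n2: "n2 \<in> N" "b = n2 \<otimes> c [^] (j::int)" using dec[OF b] by blast
  have cij: "\<phi> (c [^] i) \<otimes>\<^bsub>Q\<^esub> \<phi> (c [^] j) = \<phi> (c [^] j) \<otimes>\<^bsub>Q\<^esub> \<phi> (c [^] i)"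
  proof -
    have "c [^] i \<otimes> c [^] j = c [^] j \<otimes> c [^] i"
      using int_pow_mult[OF c(1), of i j] int_pow_mult[OF c(1), of j i] by (simp add: add.commute)
    then show ?thesis using \<phi>mul c(1) by (metis int_pow_closed)
  qed
  have ci: "c [^] i \<in> carrier G" "c [^] j \<in> carrier G" using c(1) by auto
  have n12: "n1 \<in> carrier G" "n2 \<in> carrier G" using n1 n2 Nc by auto
  have "\<phi> (a \<otimes> b) = \<phi> n1 \<otimes>\<^bsub>Q\<^esub> \<phi> (c [^] i) \<otimes>\<^bsub>Q\<^esub> (\<phi> n2 \<otimes>\<^bsub>Q\<^esub> \<phi> (c [^] j))"
    using n1 n2 \<phi>mul ci n12 a b by simp
  also have "... = \<phi> n2 \<otimes>\<^bsub>Q\<^esub> \<phi> (c [^] j) \<otimes>\<^bsub>Q\<^esub> (\<phi> n1 \<otimes>\<^bsub>Q\<^esub> \<phi> (c [^] i))"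
  proof (rule group.comm4[OF Qg])
    show "\<phi> n1 \<in> carrier Q" "\<phi> (c [^] i) \<in> carrier Q" "\<phi> n2 \<in> carrier Q" "\<phi> (c [^] j) \<in> carrier Q"
      using \<phi>car ci n12 by auto
    show "\<phi> (c [^] i) \<otimes>\<^bsub>Q\<^esub> \<phi> n2 = \<phi> n2 \<otimes>\<^bsub>Q\<^esub> \<phi> (c [^] i)" using central[OF n2(1) ci(1)] by simp
    show "\<phi> n1 \<otimes>\<^bsub>Q\<^esub> \<phi> n2 = \<phi> n2 \<otimes>\<^bsub>Q\<^esub> \<phi> n1" using central[OF n1(1) n12(2)] by simp
    show "\<phi> (c [^] i) \<otimes>\<^bsub>Q\<^esub> \<phi> (c [^] j) = \<phi> (c [^] j) \<otimes>\<^bsub>Q\<^esub> \<phi> (c [^] i)" by (rule cij)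
    show "\<phi> n1 \<otimes>\<^bsub>Q\<^esub> \<phi> (c [^] j) = \<phi> (c [^] j) \<otimes>\<^bsub>Q\<^esub> \<phi> n1" using central[OF n1(1) ci(2)] by simp
  qed
  also have "... = \<phi> (b \<otimes> a)" using n1 n2 \<phi>mul ci n12 a b by simp
  finally show ?thesis unfolding \<phi>_def .
qed


theorem lemma6p4:
  fixes A :: "('a, 'b) monoid_scheme" and G :: "'a set" and x y :: 'a and r :: int
  assumes "group A" and "finite (carrier A)"
    and "normal G A"
    and "cyclic_group (FactGroup A G)"
    and "x \<in> carrier A" and "y \<in> carrier A"
    and "r_coset A G x = r_coset A G y"
    and "conjugate_in A (x [^]\<^bsub>A\<^esub> (2::nat)) (y [^]\<^bsub>A\<^esub> (2::nat))"
    and "odd r" and "r > 1"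
    and "conjugate_in A (x [^]\<^bsub>A\<^esub> r) (y [^]\<^bsub>A\<^esub> r)"
    and "\<not> conjugate_in A x y"
  shows "4 dvd card G"
proof (rule ccontr)
  assume n4: "\<not> 4 dvd card G"
  interpret A: group A by (rule assms(1))
  interpret N: normal G A by (rule assms(3))
  have sN: "subgroup G A" by (rule N.subgroup_axioms)
  have nN: "G \<lhd> A" by (rule assms(3))
  have "conjugate_in A x y"
  proof (cases "odd (card G)")
    case True
    have comm: "\<forall>a\<in>carrier A. \<forall>n\<in>G. a \<otimes>\<^bsub>A\<^esub> n \<otimes>\<^bsub>A\<^esub> inv\<^bsub>A\<^esub> a \<otimes>\<^bsub>A\<^esub> inv\<^bsub>A\<^esub> n \<in> G"
    proof (intro ballI)
      fix a n assume a: "a \<in> carrier A" and n: "n \<in> G"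
      have "a \<otimes>\<^bsub>A\<^esub> n \<otimes>\<^bsub>A\<^esub> inv\<^bsub>A\<^esub> a \<in> G" by (rule N.inv_op_closed2[OF a n])
      moreover have "inv\<^bsub>A\<^esub> n \<in> G" by (rule subgroup.m_inv_closed[OF sN n])
      ultimately show "a \<otimes>\<^bsub>A\<^esub> n \<otimes>\<^bsub>A\<^esub> inv\<^bsub>A\<^esub> a \<otimes>\<^bsub>A\<^esub> inv\<^bsub>A\<^esub> n \<in> G"
        by (rule subgroup.m_closed[OF sN])
    qed
    show ?thesis
    proof (rule A.core[OF assms(2) nN True sN])
      show "w \<otimes>\<^bsub>A\<^esub> w \<in> G" if "w \<in> G" for w by (rule subgroup.m_closed[OF sN that that])
      show "G #>\<^bsub>A\<^esub> (a \<otimes>\<^bsub>A\<^esub> b) = G #>\<^bsub>A\<^esub> (b \<otimes>\<^bsub>A\<^esub> a)" if "a \<in> carrier A" "b \<in> carrier A" for a b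
        by (rule A.ab_from_cyclic[OF nN assms(4) nN comm that])
    qed (use assms(5-9,11) in simp_all)
  next
    case False
    obtain K where K: "K \<lhd> A" "odd (card K)" "K \<subseteq> G" "\<forall>w\<in>G. w \<otimes>\<^bsub>A\<^esub> w \<in> K"
      "\<forall>a\<in>carrier A. \<forall>n\<in>G. a \<otimes>\<^bsub>A\<^esub> n \<otimes>\<^bsub>A\<^esub> inv\<^bsub>A\<^esub> a \<otimes>\<^bsub>A\<^esub> inv\<^bsub>A\<^esub> n \<in> K"
      using A.two_complement[OF assms(2) nN _ n4] False by blast
    show ?thesis
    proof (rule A.core[OF assms(2) K(1) K(2) sN])
      show "w \<otimes>\<^bsub>A\<^esub> w \<in> K" if "w \<in> G" for w using K(4) that by simp
      show "K #>\<^bsub>A\<^esub> (a \<otimes>\<^bsub>A\<^esub> b) = K #>\<^bsub>A\<^esub> (b \<otimes>\<^bsub>A\<^esub> a)" if "a \<in> carrier A" "b \<in> carrier A" for a b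
        by (rule A.ab_from_cyclic[OF nN assms(4) K(1) K(5) that])
    qed (use assms(5-9,11) in simp_all)
  qed
  then show False using assms(12) by simp
qed

end
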